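(* Let $M$ agents have finite-horizon MDPs $\mathcal{M}^i=(\mathcal{S},\mathcal{A},H,\{P^i_h\},\{r^i_h\})$ with common finite state and action spaces, satisfying: there exist kernels $P^c_h$, $P^{\mathrm{ind},i}_h$ and $\varepsilon_{\mathsf p}\in[0,1)$ such that $P^i_h(s'|s,a)=(1-\varepsilon_{\mathsf p})P^c_h(s'|s,a)+\varepsilon_{\mathsf p}P^{\mathrm{ind},i}_h(s'|s,a)$ for all $i,h,s,a,s'$. Then for any policy $\pi$, any initial state $s_0$, any $(s,a,h)\in\mathcal{S}\times\mathcal{A}\times[H]$ and any $i,j\in[M]$, $$|d^{i,\pi}_{s_0,h}(s,a)-d^{j,\pi}_{s_0,h}(s,a)|\le\varepsilon_{\mathsf p}H.$$
   Context: $d^{i,\pi}_{s_0,h}(s,a)$ denotes the probability that $(s_h,a_h)=(s,a)$ when following $\pi$ in $\mathcal{M}^i$ starting from $s_1=s_0$. *)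

theory Defs
  imports Complex_Main
begin

text \<open>Steps are indexed by h = 1..H.  A transition kernel is
  P :: nat => 's => 'a => 's => real, where P h s a s' is P_h(s'|s,a).
  A (Markov, possibly non-stationary, randomized) policy is
  pol :: nat => 's => 'a => real, where pol h s a is pi_h(a|s).\<close>

definition stoch_kernel :: "nat \<Rightarrow> (nat \<Rightarrow> 's::finite \<Rightarrow> 'a::finite \<Rightarrow> 's \<Rightarrow> real) \<Rightarrow> bool" where
  "stoch_kernel H P \<longleftrightarrow>
     (\<forall>h\<in>{1..H}. \<forall>s a. (\<forall>s'. P h s a s' \<ge> 0) \<and> (\<Sum>s'\<in>UNIV. P h s a s') = 1)"

definition stoch_policy :: "nat \<Rightarrow> (nat \<Rightarrow> 's::finite \<Rightarrow> 'a::finite \<Rightarrow> real) \<Rightarrow> bool" where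
  "stoch_policy H pol \<longleftrightarrow>
     (\<forall>h\<in>{1..H}. \<forall>s. (\<forall>a. pol h s a \<ge> 0) \<and> (\<Sum>a\<in>UNIV. pol h s a) = 1)"

text \<open>occ P pol s0 h s a = Pr[(s_h, a_h) = (s, a)] when following pol in the
  MDP with kernel P starting from s_1 = s0 (meaningful for h >= 1).\<close>

fun occ :: "(nat \<Rightarrow> 's::finite \<Rightarrow> 'a::finite \<Rightarrow> 's \<Rightarrow> real) \<Rightarrow> (nat \<Rightarrow> 's \<Rightarrow> 'a \<Rightarrow> real)
            \<Rightarrow> 's \<Rightarrow> nat \<Rightarrow> 's \<Rightarrow> 'a \<Rightarrow> real" where
  "occ P pol s0 0 s a = 0"
| "occ P pol s0 (Suc 0) s a = (if s = s0 then pol 1 s a else 0)"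
| "occ P pol s0 (Suc (Suc n)) s a =
     (\<Sum>s'\<in>UNIV. \<Sum>a'\<in>UNIV. occ P pol s0 (Suc n) s' a' * P (Suc n) s' a' s) * pol (Suc (Suc n)) s a"

end

theory Submission
  imports Defs
begin

lemma swap4:
  fixes T :: "'x::finite \<Rightarrow> 'y::finite \<Rightarrow> 'z::finite \<Rightarrow> 'w::finite \<Rightarrow> real"
  shows "(\<Sum>x\<in>UNIV. \<Sum>y\<in>UNIV. \<Sum>z\<in>UNIV. \<Sum>w\<in>UNIV. T x y z w) = (\<Sum>z\<in>UNIV. \<Sum>w\<in>UNIV. \<Sum>x\<in>UNIV. \<Sum>y\<in>UNIV. T x y z w)"
proof -
  have "(\<Sum>x\<in>UNIV. \<Sum>y\<in>UNIV. \<Sum>z\<in>UNIV. \<Sum>w\<in>UNIV. T x y z w) = (\<Sum>x\<in>UNIV. \<Sum>z\<in>UNIV. \<Sum>y\<in>UNIV. \<Sum>w\<in>UNIV. T x y z w)"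
    by (rule sum.cong[OF refl], rule sum.swap)
  also have "\<dots> = (\<Sum>x\<in>UNIV. \<Sum>z\<in>UNIV. \<Sum>w\<in>UNIV. \<Sum>y\<in>UNIV. T x y z w)"
    by (rule sum.cong[OF refl], rule sum.cong[OF refl], rule sum.swap)
  also have "\<dots> = (\<Sum>z\<in>UNIV. \<Sum>x\<in>UNIV. \<Sum>w\<in>UNIV. \<Sum>y\<in>UNIV. T x y z w)"
    by (rule sum.swap)
  also have "\<dots> = (\<Sum>z\<in>UNIV. \<Sum>w\<in>UNIV. \<Sum>x\<in>UNIV. \<Sum>y\<in>UNIV. T x y z w)"
    by (rule sum.cong[OF refl], rule sum.swap)
  finally show ?thesis .
qed

lemma occ_step_sum:
  "(\<Sum>s\<in>UNIV. \<Sum>a\<in>UNIV. occ Q pol s0 (Suc (Suc m)) s a * f s a) =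
   (\<Sum>s'\<in>UNIV. \<Sum>a'\<in>UNIV. occ Q pol s0 (Suc m) s' a' *
      (\<Sum>s\<in>UNIV. Q (Suc m) s' a' s * (\<Sum>a\<in>UNIV. pol (Suc (Suc m)) s a * f s a)))"
proof -
  have "(\<Sum>s\<in>UNIV. \<Sum>a\<in>UNIV. occ Q pol s0 (Suc (Suc m)) s a * f s a) =
    (\<Sum>s\<in>UNIV. \<Sum>a\<in>UNIV. \<Sum>s'\<in>UNIV. \<Sum>a'\<in>UNIV. occ Q pol s0 (Suc m) s' a' * Q (Suc m) s' a' s * pol (Suc (Suc m)) s a * f s a)"
    by (simp add: sum_distrib_right)
  also have "\<dots> = (\<Sum>s'\<in>UNIV. \<Sum>a'\<in>UNIV. \<Sum>s\<in>UNIV. \<Sum>a\<in>UNIV. occ Q pol s0 (Suc m) s' a' * Q (Suc m) s' a' s * pol (Suc (Suc m)) s a * f s a)"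
    by (rule swap4)
  also have "\<dots> = (\<Sum>s'\<in>UNIV. \<Sum>a'\<in>UNIV. occ Q pol s0 (Suc m) s' a' *
      (\<Sum>s\<in>UNIV. Q (Suc m) s' a' s * (\<Sum>a\<in>UNIV. pol (Suc (Suc m)) s a * f s a)))"
    by (simp add: sum_distrib_left mult.assoc)
  finally show ?thesis .
qed

lemma conv01:
  fixes w g :: "'x::finite \<Rightarrow> real"
  assumes "\<forall>x. w x \<ge> 0" "sum w UNIV = 1" "\<forall>x. 0 \<le> g x \<and> g x \<le> 1"
  shows "0 \<le> (\<Sum>x\<in>UNIV. w x * g x) \<and> (\<Sum>x\<in>UNIV. w x * g x) \<le> 1"
proof
  show "0 \<le> (\<Sum>x\<in>UNIV. w x * g x)" using assms by (simp add: sum_nonneg)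
  have "(\<Sum>x\<in>UNIV. w x * g x) \<le> (\<Sum>x\<in>UNIV. w x)"
    by (rule sum_mono) (use assms in \<open>simp add: mult_left_le\<close>)
  then show "(\<Sum>x\<in>UNIV. w x * g x) \<le> 1" using assms by simp
qed

lemma occ_mass:
  fixes Q :: "nat \<Rightarrow> 's::finite \<Rightarrow> 'a::finite \<Rightarrow> 's \<Rightarrow> real"
  assumes K: "stoch_kernel H Q" and Pl: "stoch_policy H pol"
  shows "Suc m \<le> H \<Longrightarrow> (\<forall>s a. occ Q pol s0 (Suc m) s a \<ge> 0) \<and>
           (\<Sum>s\<in>UNIV. \<Sum>a\<in>UNIV. occ Q pol s0 (Suc m) s a) = 1"
proof (induction m)
  case 0
  then have "\<forall>s a. pol 1 s a \<ge> 0" "\<forall>s. (\<Sum>a\<in>UNIV. pol 1 s a) = 1"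
    using Pl unfolding stoch_policy_def by auto
  moreover have "(\<Sum>x\<in>UNIV. if s = s0 then pol 1 s x else 0) = (if s = s0 then \<Sum>x\<in>UNIV. pol 1 s x else 0)" for s
    by auto
  ultimately show ?case by simp
next
  case (Suc m)
  then have IH: "\<forall>s a. occ Q pol s0 (Suc m) s a \<ge> 0"
     "(\<Sum>s\<in>UNIV. \<Sum>a\<in>UNIV. occ Q pol s0 (Suc m) s a) = 1" by auto
  have pk: "\<forall>s a. pol (Suc (Suc m)) s a \<ge> 0" "\<forall>s. (\<Sum>a\<in>UNIV. pol (Suc (Suc m)) s a) = 1"
    using Pl Suc.prems unfolding stoch_policy_def by auto
  have qk: "\<forall>s a s'. Q (Suc m) s a s' \<ge> 0" "\<forall>s a. (\<Sum>s'\<in>UNIV. Q (Suc m) s a s') = 1"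
    using K Suc.prems unfolding stoch_kernel_def by auto
  have nn: "\<forall>s a. occ Q pol s0 (Suc (Suc m)) s a \<ge> 0"
    using IH pk qk by (auto intro!: sum_nonneg mult_nonneg_nonneg)
  have "(\<Sum>s\<in>UNIV. \<Sum>a\<in>UNIV. occ Q pol s0 (Suc (Suc m)) s a * (\<lambda>_ _. 1::real) s a) =
     (\<Sum>s'\<in>UNIV. \<Sum>a'\<in>UNIV. occ Q pol s0 (Suc m) s' a' *
      (\<Sum>s\<in>UNIV. Q (Suc m) s' a' s * (\<Sum>a\<in>UNIV. pol (Suc (Suc m)) s a * (\<lambda>_ _. 1::real) s a)))"
    by (rule occ_step_sum)
  also have "\<dots> = 1" using pk qk IH by simp
  finally show ?case using nn by simp
qed

lemma occ_diff:
  fixes Q1 Q2 :: "nat \<Rightarrow> 's::finite \<Rightarrow> 'a::finite \<Rightarrow> 's \<Rightarrow> real"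
  assumes K1: "stoch_kernel H Q1" and K2: "stoch_kernel H Q2" and Pl: "stoch_policy H pol"
    and D: "\<forall>h\<in>{1..H}. \<forall>s a g. (\<forall>x. 0 \<le> g x \<and> g x \<le> 1) \<longrightarrow>
              \<bar>\<Sum>x\<in>UNIV. (Q1 h s a x - Q2 h s a x) * g x\<bar> \<le> eps"
  shows "Suc m \<le> H \<Longrightarrow> \<forall>f. (\<forall>x y. 0 \<le> f x y \<and> f x y \<le> 1) \<longrightarrow>
     \<bar>(\<Sum>s\<in>UNIV. \<Sum>a\<in>UNIV. (occ Q1 pol s0 (Suc m) s a - occ Q2 pol s0 (Suc m) s a) * f s a)\<bar> \<le> eps * real m"
proof (induction m)
  case 0
  then show ?case by simp
next
  case (Suc m)
  have IH: "\<And>f. (\<forall>x y. 0 \<le> f x y \<and> f x y \<le> 1) \<Longrightarrow>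
     \<bar>(\<Sum>s\<in>UNIV. \<Sum>a\<in>UNIV. (occ Q1 pol s0 (Suc m) s a - occ Q2 pol s0 (Suc m) s a) * f s a)\<bar> \<le> eps * real m"
    using Suc by auto
  have pk: "\<forall>s a. pol (Suc (Suc m)) s a \<ge> 0" "\<forall>s. (\<Sum>a\<in>UNIV. pol (Suc (Suc m)) s a) = 1"
    using Pl Suc.prems unfolding stoch_policy_def by auto
  have qk: "\<forall>s a s'. Q1 (Suc m) s a s' \<ge> 0" "\<forall>s a. (\<Sum>s'\<in>UNIV. Q1 (Suc m) s a s') = 1"
    using K1 Suc.prems unfolding stoch_kernel_def by auto
  have m2: "(\<forall>s a. occ Q2 pol s0 (Suc m) s a \<ge> 0) \<and>
           (\<Sum>s\<in>UNIV. \<Sum>a\<in>UNIV. occ Q2 pol s0 (Suc m) s a) = 1"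
    using occ_mass[OF K2 Pl, of m s0] Suc.prems by simp
  have Dm: "\<And>s a g. (\<forall>x. 0 \<le> g x \<and> g x \<le> 1) \<Longrightarrow>
              \<bar>\<Sum>x\<in>UNIV. (Q1 (Suc m) s a x - Q2 (Suc m) s a x) * g x\<bar> \<le> eps"
    using D Suc.prems by auto
  show ?case
  proof (intro allI impI)
    fix f :: "'s \<Rightarrow> 'a \<Rightarrow> real"
    assume f01: "\<forall>x y. 0 \<le> f x y \<and> f x y \<le> 1"
    define g where "g s = (\<Sum>a\<in>UNIV. pol (Suc (Suc m)) s a * f s a)" for s
    have g01: "\<forall>x. 0 \<le> g x \<and> g x \<le> 1"
      unfolding g_def using conv01 pk f01 by blast
    define G1 where "G1 s' a' = (\<Sum>s\<in>UNIV. Q1 (Suc m) s' a' s * g s)" for s' a'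
    define G2 where "G2 s' a' = (\<Sum>s\<in>UNIV. Q2 (Suc m) s' a' s * g s)" for s' a'
    have G01: "\<forall>x y. 0 \<le> G1 x y \<and> G1 x y \<le> 1"
    proof (intro allI)
      fix x y show "0 \<le> G1 x y \<and> G1 x y \<le> 1"
        unfolding G1_def using conv01[of "Q1 (Suc m) x y" g] qk g01 by blast
    qed
    have GD: "\<bar>G1 x y - G2 x y\<bar> \<le> eps" for x y
    proof -
      have "G1 x y - G2 x y = (\<Sum>z\<in>UNIV. (Q1 (Suc m) x y z - Q2 (Suc m) x y z) * g z)"
        unfolding G1_def G2_def by (simp add: sum_subtractf left_diff_distrib)
      then show ?thesis using Dm[OF g01] by simp
    qed
    let ?d1 = "occ Q1 pol s0 (Suc m)" and ?d2 = "occ Q2 pol s0 (Suc m)"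
    have e1: "(\<Sum>s\<in>UNIV. \<Sum>a\<in>UNIV. occ Q1 pol s0 (Suc (Suc m)) s a * f s a) =
       (\<Sum>s'\<in>UNIV. \<Sum>a'\<in>UNIV. ?d1 s' a' * G1 s' a')"
      unfolding G1_def g_def by (rule occ_step_sum)
    have e2: "(\<Sum>s\<in>UNIV. \<Sum>a\<in>UNIV. occ Q2 pol s0 (Suc (Suc m)) s a * f s a) =
       (\<Sum>s'\<in>UNIV. \<Sum>a'\<in>UNIV. ?d2 s' a' * G2 s' a')"
      unfolding G2_def g_def by (rule occ_step_sum)
    have split: "(\<Sum>s\<in>UNIV. \<Sum>a\<in>UNIV. (occ Q1 pol s0 (Suc (Suc m)) s a - occ Q2 pol s0 (Suc (Suc m)) s a) * f s a)
      = (\<Sum>s'\<in>UNIV. \<Sum>a'\<in>UNIV. (?d1 s' a' - ?d2 s' a') * G1 s' a')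
        + (\<Sum>s'\<in>UNIV. \<Sum>a'\<in>UNIV. ?d2 s' a' * (G1 s' a' - G2 s' a'))"
    proof -
      have "(\<Sum>s\<in>UNIV. \<Sum>a\<in>UNIV. (occ Q1 pol s0 (Suc (Suc m)) s a - occ Q2 pol s0 (Suc (Suc m)) s a) * f s a)
        = (\<Sum>s\<in>UNIV. \<Sum>a\<in>UNIV. occ Q1 pol s0 (Suc (Suc m)) s a * f s a)
          - (\<Sum>s\<in>UNIV. \<Sum>a\<in>UNIV. occ Q2 pol s0 (Suc (Suc m)) s a * f s a)"
        by (simp add: left_diff_distrib sum_subtractf)
      also have "\<dots> = (\<Sum>s'\<in>UNIV. \<Sum>a'\<in>UNIV. ?d1 s' a' * G1 s' a') - (\<Sum>s'\<in>UNIV. \<Sum>a'\<in>UNIV. ?d2 s' a' * G2 s' a')"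
        using e1 e2 by simp
      also have "\<dots> = (\<Sum>s'\<in>UNIV. \<Sum>a'\<in>UNIV. (?d1 s' a' - ?d2 s' a') * G1 s' a')
        + (\<Sum>s'\<in>UNIV. \<Sum>a'\<in>UNIV. ?d2 s' a' * (G1 s' a' - G2 s' a'))"
        by (simp add: algebra_simps sum_subtractf sum.distrib)
      finally show ?thesis .
    qed
    have b1: "\<bar>\<Sum>s'\<in>UNIV. \<Sum>a'\<in>UNIV. (?d1 s' a' - ?d2 s' a') * G1 s' a'\<bar> \<le> eps * real m"
      using IH[OF G01] .
    have "\<bar>\<Sum>s'\<in>UNIV. \<Sum>a'\<in>UNIV. ?d2 s' a' * (G1 s' a' - G2 s' a')\<bar>
        \<le> (\<Sum>s'\<in>UNIV. \<Sum>a'\<in>UNIV. \<bar>?d2 s' a' * (G1 s' a' - G2 s' a')\<bar>)"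
      by (rule order_trans[OF sum_abs]) (intro sum_mono sum_abs)
    also have "\<dots> \<le> (\<Sum>s'\<in>UNIV. \<Sum>a'\<in>UNIV. ?d2 s' a' * eps)"
      apply (intro sum_mono)
      using m2 GD by (simp add: abs_mult mult_left_mono)
    also have "\<dots> = eps" using m2 by (simp add: sum_distrib_right[symmetric])
    finally have b2: "\<bar>\<Sum>s'\<in>UNIV. \<Sum>a'\<in>UNIV. ?d2 s' a' * (G1 s' a' - G2 s' a')\<bar> \<le> eps" .
    show "\<bar>(\<Sum>s\<in>UNIV. \<Sum>a\<in>UNIV. (occ Q1 pol s0 (Suc (Suc m)) s a - occ Q2 pol s0 (Suc (Suc m)) s a) * f s a)\<bar>
       \<le> eps * real (Suc m)"
      unfolding split using b1 b2 by (simp add: algebra_simps)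
  qed
qed

theorem lemma11:
  fixes M H :: nat
    and P :: "nat \<Rightarrow> nat \<Rightarrow> 's::finite \<Rightarrow> 'a::finite \<Rightarrow> 's \<Rightarrow> real"
    and Pc :: "nat \<Rightarrow> 's \<Rightarrow> 'a \<Rightarrow> 's \<Rightarrow> real"
    and Pind :: "nat \<Rightarrow> nat \<Rightarrow> 's \<Rightarrow> 'a \<Rightarrow> 's \<Rightarrow> real"
    and eps :: real
    and pol :: "nat \<Rightarrow> 's \<Rightarrow> 'a \<Rightarrow> real"
    and s0 s :: 's and a :: 'a and h i j :: nat
  assumes "0 \<le> eps" and "eps < 1"
    and "stoch_kernel H Pc"
    and "\<forall>k\<in>{1..M}. stoch_kernel H (Pind k)"
    and "\<forall>k\<in>{1..M}. \<forall>h'\<in>{1..H}. \<forall>s a s'.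
           P k h' s a s' = (1 - eps) * Pc h' s a s' + eps * Pind k h' s a s'"
    and "stoch_policy H pol"
    and "h \<in> {1..H}" and "i \<in> {1..M}" and "j \<in> {1..M}"
  shows "\<bar>occ (P i) pol s0 h s a - occ (P j) pol s0 h s a\<bar> \<le> eps * real H"
proof -
  have kern: "stoch_kernel H (P k)" if k: "k \<in> {1..M}" for k
    unfolding stoch_kernel_def
  proof (intro ballI allI conjI)
    fix h' s a s' assume h': "h' \<in> {1..H}"
    have "Pc h' s a s' \<ge> 0" "Pind k h' s a s' \<ge> 0"
      using assms(3,4) k h' unfolding stoch_kernel_def by auto
    then show "0 \<le> P k h' s a s'" using assms(1,2,5) k h' by simp
  next
    fix h' s a assume h': "h' \<in> {1..H}"
    have "(\<Sum>s'\<in>UNIV. Pc h' s a s') = 1" "(\<Sum>s'\<in>UNIV. Pind k h' s a s') = 1"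
      using assms(3,4) k h' unfolding stoch_kernel_def by auto
    then show "(\<Sum>s'\<in>UNIV. P k h' s a s') = 1" using assms(5) k h'
      by (simp add: sum.distrib sum_distrib_left[symmetric])
  qed
  have D: "\<forall>h\<in>{1..H}. \<forall>s a g. (\<forall>x. 0 \<le> g x \<and> g x \<le> 1) \<longrightarrow>
              \<bar>\<Sum>x\<in>UNIV. (P i h s a x - P j h s a x) * g x\<bar> \<le> eps"
  proof (intro ballI allI impI)
    fix h' s a and g :: "'s \<Rightarrow> real" assume h': "h' \<in> {1..H}" and g: "\<forall>x. 0 \<le> g x \<and> g x \<le> 1"
    have ki: "stoch_kernel H (Pind i)" and kj: "stoch_kernel H (Pind j)" using assms(4,8,9) by auto
    have ci: "0 \<le> (\<Sum>x\<in>UNIV. Pind i h' s a x * g x) \<and> (\<Sum>x\<in>UNIV. Pind i h' s a x * g x) \<le> 1"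
      by (rule conv01) (use ki h' g in \<open>auto simp: stoch_kernel_def\<close>)
    have cj: "0 \<le> (\<Sum>x\<in>UNIV. Pind j h' s a x * g x) \<and> (\<Sum>x\<in>UNIV. Pind j h' s a x * g x) \<le> 1"
      by (rule conv01) (use kj h' g in \<open>auto simp: stoch_kernel_def\<close>)
    have "(\<Sum>x\<in>UNIV. (P i h' s a x - P j h' s a x) * g x)
       = eps * ((\<Sum>x\<in>UNIV. Pind i h' s a x * g x) - (\<Sum>x\<in>UNIV. Pind j h' s a x * g x))"
    proof -
      have "(P i h' s a x - P j h' s a x) * g x = eps * (Pind i h' s a x * g x) - eps * (Pind j h' s a x * g x)" for x
      proof -
        have "P i h' s a x = (1 - eps) * Pc h' s a x + eps * Pind i h' s a x"
             "P j h' s a x = (1 - eps) * Pc h' s a x + eps * Pind j h' s a x"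
          using assms(5,8,9) h' by blast+
        then show ?thesis by (simp only:) (simp add: algebra_simps)
      qed
      then show ?thesis by (simp add: sum_distrib_left sum_subtractf right_diff_distrib)
    qed
    also have "\<bar>\<dots>\<bar> \<le> eps * 1"
      unfolding abs_mult using ci cj assms(1) by (simp add: mult_left_le abs_le_iff)
    finally show "\<bar>\<Sum>x\<in>UNIV. (P i h' s a x - P j h' s a x) * g x\<bar> \<le> eps" by simp
  qed
  obtain m where hm: "h = Suc m" using assms(7) by (cases h) auto
  have mH: "Suc m \<le> H" using assms(7) hm by simp
  define f where "f x y = (if x = s \<and> y = a then 1 else (0::real))" for x y
  have f01: "\<forall>x y. 0 \<le> f x y \<and> f x y \<le> 1" unfolding f_def by auto
  have "\<bar>(\<Sum>x\<in>UNIV. \<Sum>y\<in>UNIV. (occ (P i) pol s0 (Suc m) x y - occ (P j) pol s0 (Suc m) x y) * f x y)\<bar> \<le> eps * real m"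
    using occ_diff[OF kern[OF assms(8)] kern[OF assms(9)] assms(6) D mH] f01 by blast
  moreover have "(\<Sum>x\<in>UNIV. \<Sum>y\<in>UNIV. (occ (P i) pol s0 (Suc m) x y - occ (P j) pol s0 (Suc m) x y) * f x y)
     = occ (P i) pol s0 h s a - occ (P j) pol s0 h s a"
  proof -
    have "(\<Sum>y\<in>UNIV. (occ (P i) pol s0 (Suc m) x y - occ (P j) pol s0 (Suc m) x y) * f x y)
       = (if x = s then occ (P i) pol s0 (Suc m) s a - occ (P j) pol s0 (Suc m) s a else 0)" for x
      unfolding f_def by (cases "x = s") (auto simp: mult.commute[of _ "if _ then _ else _"] if_distrib cong: if_cong)
    then show ?thesis unfolding hm by simp
  qed
  moreover have "eps * real m \<le> eps * real H" using mH assms(1) by (intro mult_left_mono) auto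
  ultimately show ?thesis by linarith
qed

end
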